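(* Let $\mathbb{T}=\mathbb{R}/(2\pi\mathbb{Z})$, let $g\in\mathcal{P}(\mathbb{R})$ have finite first moment, and let $m(\mathrm{d}x)=\frac{1}{2\pi}\mathrm{d}x$ be the uniform probability measure on $\mathbb{T}$. For all $\kappa\ge 0$ and all $\beta,\sigma>0$, the product measure $m\otimes g\in\mathcal{P}(\mathbb{T}\times\mathbb{R})$ is a stationary MFG equilibrium with intrinsic frequency distribution $g$.
   Context: For $x\in\mathbb{T}$ and $\mu\in\mathcal{P}(\mathbb{T}\times\mathbb{R})$ set $c(x,\mu):=\int_{\mathbb{T}\times\mathbb{R}}2\sin^2\big(\frac{x-y}{2}\big)\mu(\mathrm{d}y,\mathrm{d}\omega)$. Fix a filtered probability space $(\Omega,\mathbb{F},\mathbb{P})$ satisfying the usual conditions and supporting an $\mathbb{F}$-Brownian motion $B$, such that for every $\nu_0\in\mathcal{P}(\mathbb{T})$ there is an $\mathcal{F}_0$-measurable $\mathbb{T}$-valued random variable with law $\nu_0$. Let $\mathcal{A}$ be the set of square-integrable $\mathbb{F}$-progressively measurable real processes $\alpha$ on $[0,\infty)$. For a flow $(\mu_t)_{t\ge0}\subset\mathcal{P}(\mathbb{T}\times\mathbb{R})$ whose second marginal is $g$ for every $t$, write (disintegration) $\mu_t(\mathrm{d}x,\mathrm{d}\omega)=\mu^\omega_t(\mathrm{d}x)g(\mathrm{d}\omega)$. For $\omega\in\mathbb{R}$ and $\alpha\in\mathcal{A}$, let $X^{\omega,\alpha}_t=X^\omega_0+\int_0^t\alpha_s\mathrm{d}s+\omega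 t+\sigma B_t$ (on $\mathbb{T}$) with $X^\omega_0$ $\mathcal{F}_0$-measurable of law $\mu^\omega_0$, and $J^{\omega,\mu}(\alpha):=\mathbb{E}\int_0^\infty e^{-\beta t}\big[\frac12\alpha_t^2+\kappa c(X^{\omega,\alpha}_t,\mu_t)\big]\mathrm{d}t$. The flow $(\mu_t)$ is a solution of the MFG problem with intrinsic frequency distribution $g$ if (i) the second marginal of every $\mu_t$ is $g$, and (ii) there is a Borel set $E$ with $g(E)=1$ such that for every $\omega\in E$ the disintegration holds with $\mu^\omega_t\in\mathcal{P}(\mathbb{T})$ and there exists $\alpha^\omega_*\in\mathcal{A}$ with $\inf_{\alpha\in\mathcal{A}}J^{\omega,\mu}(\alpha)=J^{\omega,\mu}(\alpha^\omega_* )$ and $\mathcal{L}(X^{\omega,\alpha^\omega_*}_t)=\mu^\omega_t$ for all $t\ge0$. A measure $\mu\in\mathcal{P}(\mathbb{T}\times\mathbb{R})$ is a stationary MFG equilibrium with intrinsic frequency distribution $g$ if the constant flow $\mu_t=\mu$ is such a solution. *)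

theory Defs
  imports "HOL-Probability.Probability"
begin

text \<open>The torus T = R/(2 pi Z) is represented by the fundamental domain [0, 2 pi);
  tproj is the canonical projection R -> T.  Measures on T are Borel measures on the
  reals concentrated on [0, 2 pi); measures on T x R are Borel measures on real x real
  concentrated on [0, 2 pi) x R.\<close>

definition tproj :: "real \<Rightarrow> real" where
  "tproj x = x - 2 * pi * of_int \<lfloor>x / (2 * pi)\<rfloor>"

definition torus_set :: "real set" where
  "torus_set = {0..<2 * pi}"

definition prob_T :: "real measure \<Rightarrow> bool" where
  "prob_T \<nu> \<longleftrightarrow> prob_space \<nu> \<and> sets \<nu> = sets borel \<and> emeasure \<nu> torus_set = 1"

definition prob_TR :: "(real \<times> real) measure \<Rightarrow> bool" where
  "prob_TR \<mu> \<longleftrightarrow> prob_space \<mu> \<and> sets \<mu> = sets (borel \<Otimes>\<^sub>M borel)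
      \<and> emeasure \<mu> (torus_set \<times> UNIV) = 1"

definition unif_T :: "real measure" where
  "unif_T = uniform_measure lborel torus_set"

definition cost_c :: "real \<Rightarrow> (real \<times> real) measure \<Rightarrow> real" where
  "cost_c x \<mu> = (\<integral>p. 2 * (sin ((x - fst p) / 2))\<^sup>2 \<partial>\<mu>)"

definition usual_filtered_prob_space :: "'a measure \<Rightarrow> (real \<Rightarrow> 'a measure) \<Rightarrow> bool" where
  "usual_filtered_prob_space M F \<longleftrightarrow>
     prob_space M \<and>
     (\<forall>N A. N \<in> null_sets M \<and> A \<subseteq> N \<longrightarrow> A \<in> sets M) \<and>
     (\<forall>t\<ge>0. space (F t) = space M \<and> sets (F t) \<subseteq> sets M) \<and>
     (\<forall>s t. 0 \<le> s \<and> s \<le> t \<longrightarrow> sets (F s) \<subseteq> sets (F t)) \<and>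
     (\<forall>N. N \<in> null_sets M \<longrightarrow> N \<in> sets (F 0)) \<and>
     (\<forall>t\<ge>0. sets (F t) = (\<Inter>s\<in>{t<..}. sets (F s)))"

definition is_F_brownian_motion :: "'a measure \<Rightarrow> (real \<Rightarrow> 'a measure) \<Rightarrow> (real \<Rightarrow> 'a \<Rightarrow> real) \<Rightarrow> bool" where
  "is_F_brownian_motion M F B \<longleftrightarrow>
     (\<forall>\<omega>\<in>space M. B 0 \<omega> = 0) \<and>
     (\<forall>\<omega>\<in>space M. continuous_on {0..} (\<lambda>t. B t \<omega>)) \<and>
     (\<forall>t\<ge>0. B t \<in> borel_measurable (F t)) \<and>
     (\<forall>s t. 0 \<le> s \<and> s < t \<longrightarrow>
        distributed M lborel (\<lambda>\<omega>. B t \<omega> - B s \<omega>) (\<lambda>x. ennreal (normal_density 0 (sqrt (t - s)) x)) \<and>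
        (\<forall>A\<in>sets (F s). \<forall>C\<in>sets borel.
           measure M (A \<inter> {\<omega>\<in>space M. B t \<omega> - B s \<omega> \<in> C})
             = measure M A * measure M {\<omega>\<in>space M. B t \<omega> - B s \<omega> \<in> C}))"

definition rich_F0 :: "'a measure \<Rightarrow> (real \<Rightarrow> 'a measure) \<Rightarrow> bool" where
  "rich_F0 M F \<longleftrightarrow> (\<forall>\<nu>. prob_T \<nu> \<longrightarrow>
     (\<exists>X0. X0 \<in> borel_measurable (F 0) \<and> (\<forall>\<omega>\<in>space M. X0 \<omega> \<in> torus_set) \<and> distr M borel X0 = \<nu>))"

definition progressive :: "'a measure \<Rightarrow> (real \<Rightarrow> 'a measure) \<Rightarrow> (real \<Rightarrow> 'a \<Rightarrow> real) \<Rightarrow> bool" where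
  "progressive M F \<alpha> \<longleftrightarrow>
     (\<forall>t\<ge>0. (\<lambda>(s, \<omega>). \<alpha> s \<omega>) \<in> borel_measurable (restrict_space borel {0..t} \<Otimes>\<^sub>M F t))"

definition admissible :: "'a measure \<Rightarrow> (real \<Rightarrow> 'a measure) \<Rightarrow> (real \<Rightarrow> 'a \<Rightarrow> real) set" where
  "admissible M F = {\<alpha>. progressive M F \<alpha> \<and>
     (\<integral>\<^sup>+\<omega>. (\<integral>\<^sup>+s\<in>{0..}. ennreal ((\<alpha> s \<omega>)\<^sup>2) \<partial>lborel) \<partial>M) < \<infinity>}"

definition state :: "(real \<Rightarrow> 'a \<Rightarrow> real) \<Rightarrow> real \<Rightarrow> ('a \<Rightarrow> real) \<Rightarrow> real \<Rightarrow> (real \<Rightarrow> 'a \<Rightarrow> real) \<Rightarrow> real \<Rightarrow> 'a \<Rightarrow> real" where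
  "state B \<sigma> X0 w \<alpha> t \<omega> = tproj (X0 \<omega> + (LBINT s:{0..t}. \<alpha> s \<omega>) + w * t + \<sigma> * B t \<omega>)"

definition cost_J :: "'a measure \<Rightarrow> (real \<Rightarrow> 'a \<Rightarrow> real) \<Rightarrow> real \<Rightarrow> real \<Rightarrow> real \<Rightarrow>
    (real \<Rightarrow> (real \<times> real) measure) \<Rightarrow> ('a \<Rightarrow> real) \<Rightarrow> real \<Rightarrow> (real \<Rightarrow> 'a \<Rightarrow> real) \<Rightarrow> ennreal" where
  "cost_J M B \<beta> \<sigma> \<kappa> \<mu> X0 w \<alpha> =
     (\<integral>\<^sup>+\<omega>. (\<integral>\<^sup>+t\<in>{0..}. ennreal (exp (- \<beta> * t) *
        ((\<alpha> t \<omega>)\<^sup>2 / 2 + \<kappa> * cost_c (state B \<sigma> X0 w \<alpha> t \<omega>) (\<mu> t))) \<partial>lborel) \<partial>M)"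

text \<open>The disintegration mu_t(dx,dw) = mu_t^w(dx) g(dw) is given by a
  kernel K t w; for g-a.e. w (w in E) the kernel is a probability measure on T and for every
  F_0-measurable initial condition with law mu_0^w an optimal admissible control exists whose
  state has law mu_t^w for all t \<ge> 0.\<close>
definition MFG_solution :: "'a measure \<Rightarrow> (real \<Rightarrow> 'a measure) \<Rightarrow> (real \<Rightarrow> 'a \<Rightarrow> real) \<Rightarrow>
    real \<Rightarrow> real \<Rightarrow> real \<Rightarrow> real measure \<Rightarrow> (real \<Rightarrow> (real \<times> real) measure) \<Rightarrow> bool" where
  "MFG_solution M F B \<beta> \<sigma> \<kappa> g \<mu> \<longleftrightarrow>
     (\<forall>t\<ge>0. prob_TR (\<mu> t) \<and> distr (\<mu> t) borel snd = g) \<and>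
     (\<exists>E \<in> sets borel. emeasure g E = 1 \<and>
       (\<exists>K :: real \<Rightarrow> real \<Rightarrow> real measure.
          (\<forall>t\<ge>0. \<forall>A\<in>sets borel. (\<lambda>w. emeasure (K t w) A) \<in> borel_measurable borel) \<and>
          (\<forall>t\<ge>0. \<forall>A\<in>sets borel. \<forall>C\<in>sets borel.
              emeasure (\<mu> t) (A \<times> C) = (\<integral>\<^sup>+w. indicator C w * emeasure (K t w) A \<partial>g)) \<and>
          (\<forall>w\<in>E. (\<forall>t\<ge>0. prob_T (K t w)) \<and>
             (\<forall>X0. X0 \<in> borel_measurable (F 0) \<and> (\<forall>\<omega>\<in>space M. X0 \<omega> \<in> torus_set)
                   \<and> distr M borel X0 = K 0 w \<longrightarrow>
               (\<exists>\<alpha>s \<in> admissible M F.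
                  (INF \<alpha>\<in>admissible M F. cost_J M B \<beta> \<sigma> \<kappa> \<mu> X0 w \<alpha>)
                     = cost_J M B \<beta> \<sigma> \<kappa> \<mu> X0 w \<alpha>s \<and>
                  (\<forall>t\<ge>0. distr M borel (state B \<sigma> X0 w \<alpha>s t) = K t w))))))"

definition stationary_MFG_equilibrium :: "'a measure \<Rightarrow> (real \<Rightarrow> 'a measure) \<Rightarrow> (real \<Rightarrow> 'a \<Rightarrow> real) \<Rightarrow>
    real \<Rightarrow> real \<Rightarrow> real \<Rightarrow> real measure \<Rightarrow> (real \<times> real) measure \<Rightarrow> bool" where
  "stationary_MFG_equilibrium M F B \<beta> \<sigma> \<kappa> g \<mu> \<longleftrightarrow> MFG_solution M F B \<beta> \<sigma> \<kappa> g (\<lambda>t. \<mu>)"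

end

theory Submission
  imports Defs
begin


lemma tproj_range: "tproj x \<in> torus_set"
proof -
  have p: "2*pi > 0" by simp
  have "of_int \<lfloor>x / (2 * pi)\<rfloor> \<le> x / (2*pi)" by (rule of_int_floor_le)
  hence a: "2*pi * of_int \<lfloor>x / (2 * pi)\<rfloor> \<le> x" using p by (simp add: le_divide_eq mult.commute)
  have "x / (2*pi) < of_int \<lfloor>x / (2 * pi)\<rfloor> + 1" by (rule real_of_int_floor_add_one_gt)
  hence b: "x < 2*pi * of_int \<lfloor>x / (2 * pi)\<rfloor> + 2*pi" using p by (simp add: divide_less_eq algebra_simps)
  show ?thesis using a b unfolding tproj_def torus_set_def by auto
qed

lemma tproj_id: "x \<in> torus_set \<Longrightarrow> tproj x = x"
proof -
  assume "x \<in> torus_set"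
  hence "0 \<le> x / (2*pi)" "x / (2*pi) < 1" unfolding torus_set_def by auto
  hence "\<lfloor>x / (2 * pi)\<rfloor> = 0" by (simp add: floor_eq_iff)
  thus ?thesis unfolding tproj_def by simp
qed

lemma tproj_shift: "tproj (x + 2*pi * of_int k) = tproj x"
proof -
  have "(x + 2*pi * of_int k) / (2*pi) = x / (2*pi) + of_int k" by (simp add: field_simps)
  hence "\<lfloor>(x + 2*pi * of_int k) / (2*pi)\<rfloor> = \<lfloor>x / (2*pi)\<rfloor> + k" by simp
  thus ?thesis unfolding tproj_def by (simp add: algebra_simps)
qed

lemma tproj_measurable[measurable]: "tproj \<in> borel_measurable borel"
  unfolding tproj_def by measurable

lemma emeasure_lborel_translate:
  assumes "S \<in> sets borel"
  shows "emeasure lborel ((\<lambda>x. a + x) -` S) = emeasure lborel (S::real set)"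
proof -
  have "emeasure lborel S = emeasure (distr lborel borel ((+) a)) S"
    by (simp add: lborel_distr_plus)
  also have "\<dots> = emeasure lborel (((+) a) -` S \<inter> space lborel)"
    using assms by (subst emeasure_distr) auto
  finally show ?thesis by simp
qed

lemma unif_T_lborel:
  assumes "S \<in> sets borel"
  shows "emeasure unif_T S = emeasure lborel (torus_set \<inter> S) / ennreal (2*pi)"
  using assms unfolding unif_T_def torus_set_def by (subst emeasure_uniform_measure) auto

lemma prob_unif_T: "prob_space unif_T"
  unfolding unif_T_def torus_set_def by (rule prob_space_uniform_measure) auto

lemma sets_unif_T[simp, measurable_cong]: "sets unif_T = sets borel"
  unfolding unif_T_def by simp

lemma space_unif_T[simp]: "space unif_T = UNIV"
  unfolding unif_T_def by simp

lemma translate_core: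
  assumes D: "D \<in> sets borel" and a: "a \<in> torus_set"
  shows "emeasure lborel (torus_set \<inter> (\<lambda>x. tproj (x + a)) -` D) = emeasure lborel (torus_set \<inter> D)"
proof -
  define S1 where "S1 = (\<lambda>x. a + x) -` (D \<inter> {a..<2*pi})"
  define S2 where "S2 = (\<lambda>x. (a - 2*pi) + x) -` (D \<inter> {0..<a})"
  have a0: "0 \<le> a" "a < 2*pi" using a unfolding torus_set_def by auto
  have eq: "torus_set \<inter> (\<lambda>x. tproj (x + a)) -` D = S1 \<union> S2"
  proof (intro set_eqI iffI)
    fix x assume x: "x \<in> torus_set \<inter> (\<lambda>x. tproj (x + a)) -` D"
    show "x \<in> S1 \<union> S2"
    proof (cases "x + a < 2*pi")
      case True
      hence "tproj (x+a) = x + a" using x a0 by (intro tproj_id) (auto simp: torus_set_def)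
      thus ?thesis using x True unfolding S1_def by (auto simp: torus_set_def add.commute)
    next
      case False
      have "tproj (x+a) = tproj ((x + a - 2*pi) + 2*pi * of_int 1)" by simp
      also have "\<dots> = x + a - 2*pi" unfolding tproj_shift using x a0 False
        by (intro tproj_id) (auto simp: torus_set_def)
      finally have t: "tproj (x+a) = x + a - 2*pi" .
      have "x + a - 2*pi \<in> D" using x t by auto
      hence "(a - 2*pi) + x \<in> D \<inter> {0..<a}" using x False by (auto simp: torus_set_def algebra_simps)
      thus ?thesis unfolding S2_def by simp
    qed
  next
    fix x assume "x \<in> S1 \<union> S2"
    then show "x \<in> torus_set \<inter> (\<lambda>x. tproj (x + a)) -` D"
    proof
      assume x: "x \<in> S1"
      hence "tproj (x+a) = x + a" using a0 by (intro tproj_id) (auto simp: torus_set_def S1_def)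
      thus ?thesis using x a0 unfolding S1_def by (auto simp: torus_set_def add.commute)
    next
      assume x: "x \<in> S2"
      have "tproj (x+a) = tproj ((x + a - 2*pi) + 2*pi * of_int 1)" by simp
      also have "\<dots> = x + a - 2*pi" unfolding tproj_shift using x a0
        by (intro tproj_id) (auto simp: torus_set_def S2_def)
      finally have t: "tproj (x+a) = x + a - 2*pi" .
      have "x + a - 2*pi \<in> D" using x unfolding S2_def by (simp add: algebra_simps)
      hence "tproj (x+a) \<in> D" using t by simp
      thus ?thesis using x a0 unfolding S2_def by (auto simp: torus_set_def algebra_simps)
    qed
  qed
  have m1: "S1 \<in> sets borel" "S2 \<in> sets borel" unfolding S1_def S2_def using D by auto
  have "emeasure lborel (S1 \<union> S2) = emeasure lborel S1 + emeasure lborel S2"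
    using m1 by (intro plus_emeasure[symmetric]) (auto simp: S1_def S2_def)
  also have "\<dots> = emeasure lborel (D \<inter> {a..<2*pi}) + emeasure lborel (D \<inter> {0..<a})"
    unfolding S1_def S2_def using D
    by (simp only: emeasure_lborel_translate[of "D \<inter> {a..<2*pi}"] emeasure_lborel_translate[of "D \<inter> {0..<a}"] sets.Int atLeastLessThan_borel)
  also have "\<dots> = emeasure lborel (D \<inter> {a..<2*pi} \<union> D \<inter> {0..<a})"
    using D by (intro plus_emeasure) auto
  also have "D \<inter> {a..<2*pi} \<union> D \<inter> {0..<a} = torus_set \<inter> D"
    using a0 by (auto simp: torus_set_def)
  finally show ?thesis using eq by simp
qed

lemma unif_T_translate: "distr unif_T borel (\<lambda>x. tproj (x + c)) = unif_T"
proof (rule measure_eqI)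
  show "sets (distr unif_T borel (\<lambda>x. tproj (x + c))) = sets unif_T" by simp
next
  fix D assume "D \<in> sets (distr unif_T borel (\<lambda>x. tproj (x + c)))"
  hence D[measurable]: "D \<in> sets borel" by simp
  obtain k where c: "c = tproj c + 2*pi * of_int k" unfolding tproj_def by auto
  have f: "(\<lambda>x. tproj (x + c)) = (\<lambda>x. tproj (x + tproj c))"
  proof
    fix x
    have "tproj (x + c) = tproj ((x + tproj c) + 2*pi * of_int k)" by (subst c) (simp add: algebra_simps)
    thus "tproj (x + c) = tproj (x + tproj c)" by (simp add: tproj_shift)
  qed
  have "emeasure (distr unif_T borel (\<lambda>x. tproj (x + c))) D
     = emeasure unif_T ((\<lambda>x. tproj (x + tproj c)) -` D)"
    by (subst emeasure_distr) (auto simp: f)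
  also have "\<dots> = emeasure lborel (torus_set \<inter> (\<lambda>x. tproj (x + tproj c)) -` D) / ennreal (2*pi)"
  proof (rule unif_T_lborel)
    have "(\<lambda>x. tproj (x + tproj c)) -` D \<inter> space borel \<in> sets borel"
      by (rule measurable_sets[OF _ D]) measurable
    thus "(\<lambda>x. tproj (x + tproj c)) -` D \<in> sets borel" by simp
  qed
  also have "\<dots> = emeasure unif_T D"
    by (simp add: translate_core[OF D tproj_range] unif_T_lborel)
  finally show "emeasure (distr unif_T borel (\<lambda>x. tproj (x + c))) D = emeasure unif_T D" .
qed


lemma sin_sq_shift: "(sin (u + of_int k * pi))\<^sup>2 = (sin u)\<^sup>2"
proof -
  have s: "sin (of_int k * pi) = 0" by (simp add: sin_times_pi_eq_0)
  hence c: "(cos (of_int k * pi))\<^sup>2 = 1" using sin_cos_squared_add[of "of_int k * pi"] by simp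
  have "sin (u + of_int k * pi) = sin u * cos (of_int k * pi)" by (simp add: sin_add s)
  thus ?thesis by (simp add: power_mult_distrib c)
qed

lemma f0_periodic: "2 * (sin ((0 - tproj z) / 2))\<^sup>2 = 2 * (sin ((0 - z) / 2))\<^sup>2"
proof -
  have "(0 - tproj z) / 2 = (0 - z)/2 + of_int \<lfloor>z / (2 * pi)\<rfloor> * pi"
    unfolding tproj_def by (simp add: field_simps)
  thus ?thesis by (simp only: sin_sq_shift)
qed

lemma cost_c_const:
  assumes g: "prob_space g" "sets g = sets borel"
  shows "cost_c x (unif_T \<Otimes>\<^sub>M g) = cost_c 0 (unif_T \<Otimes>\<^sub>M g)"
proof -
  have d: "distr (unif_T \<Otimes>\<^sub>M g) unif_T fst = unif_T"
    using prob_space.distr_pair_fst[OF g(1)] .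
  have ci: "cost_c y (unif_T \<Otimes>\<^sub>M g) = (\<integral>z. 2 * (sin ((y - z) / 2))\<^sup>2 \<partial>unif_T)" for y
  proof -
    have "(\<integral>z. 2 * (sin ((y - z) / 2))\<^sup>2 \<partial>unif_T)
        = (\<integral>z. 2 * (sin ((y - z) / 2))\<^sup>2 \<partial>distr (unif_T \<Otimes>\<^sub>M g) unif_T fst)" by (simp add: d)
    also have "\<dots> = cost_c y (unif_T \<Otimes>\<^sub>M g)" unfolding cost_c_def
      by (subst integral_distr) (auto simp: measurable_cong_sets[OF refl g(2)])
    finally show ?thesis ..
  qed
  have "(\<integral>z. 2 * (sin ((0 - z) / 2))\<^sup>2 \<partial>unif_T)
      = (\<integral>z. 2 * (sin ((0 - z) / 2))\<^sup>2 \<partial>distr unif_T borel (\<lambda>y. tproj (y + - x)))"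
    by (simp only: unif_T_translate)
  also have "\<dots> = (\<integral>z. 2 * (sin ((0 - tproj (z + - x)) / 2))\<^sup>2 \<partial>unif_T)"
    by (subst integral_distr) auto
  also have "\<dots> = (\<integral>z. 2 * (sin ((x - z) / 2))\<^sup>2 \<partial>unif_T)"
    by (simp only: f0_periodic) (simp add: algebra_simps)
  finally show ?thesis using ci by simp
qed




lemma law_state:
  assumes U: "usual_filtered_prob_space M F" and BM: "is_F_brownian_motion M F B"
    and X0: "X0 \<in> borel_measurable (F 0)" "\<forall>\<omega>\<in>space M. X0 \<omega> \<in> torus_set"
    and LX: "distr M borel X0 = unif_T" and t: "t \<ge> 0"
  shows "distr M borel (state B \<sigma> X0 w (\<lambda>t \<omega>. 0) t) = unif_T"
proof -
  have Ud1: "prob_space M"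
    using conjunct1[OF U[unfolded usual_filtered_prob_space_def]] .
  have Ud2: "\<forall>t\<ge>0. space (F t) = space M \<and> sets (F t) \<subseteq> sets M"
    using conjunct1[OF conjunct2[OF conjunct2[OF U[unfolded usual_filtered_prob_space_def]]]] .
  note Ud = Ud1 Ud2
  interpret P: prob_space M by (rule Ud(1))
  have spF: "space (F 0) = space M" and sF: "sets (F 0) \<subseteq> sets M"
    using Ud(2) by blast+
  have X0M[measurable]: "X0 \<in> borel_measurable M"
    by (rule measurable_from_subalg[OF _ X0(1)]) (simp add: subalgebra_def spF sF)
  have B0: "\<forall>\<omega>\<in>space M. B 0 \<omega> = 0" using conjunct1[OF BM[unfolded is_F_brownian_motion_def]] .
  have st: "state B \<sigma> X0 w (\<lambda>t \<omega>. 0) t \<omega> = tproj (X0 \<omega> + w * t + \<sigma> * B t \<omega>)" for \<omega>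
    unfolding state_def by simp
  show ?thesis
  proof (cases "t = 0")
    case True
    have "distr M borel (state B \<sigma> X0 w (\<lambda>t \<omega>. 0) t) = distr M borel X0"
      by (rule distr_cong) (auto simp: state_def True B0 X0(2) tproj_id)
    thus ?thesis using LX by simp
  next
    case False
    hence tp: "0 < t" using t by simp
    define Y where "Y = (\<lambda>\<omega>. B t \<omega> - B 0 \<omega>)"
    have BMt: "distributed M lborel Y (\<lambda>x. ennreal (normal_density 0 (sqrt (t - 0)) x))"
      "\<forall>A\<in>sets (F 0). \<forall>C\<in>sets borel.
           measure M (A \<inter> {\<omega>\<in>space M. Y \<omega> \<in> C})
             = measure M A * measure M {\<omega>\<in>space M. Y \<omega> \<in> C}"
    proof -
      have "\<forall>s t. 0 \<le> s \<and> s < t \<longrightarrow>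
        distributed M lborel (\<lambda>\<omega>. B t \<omega> - B s \<omega>) (\<lambda>x. ennreal (normal_density 0 (sqrt (t - s)) x)) \<and>
        (\<forall>A\<in>sets (F s). \<forall>C\<in>sets borel.
           measure M (A \<inter> {\<omega>\<in>space M. B t \<omega> - B s \<omega> \<in> C})
             = measure M A * measure M {\<omega>\<in>space M. B t \<omega> - B s \<omega> \<in> C})"
        using conjunct2[OF conjunct2[OF conjunct2[OF BM[unfolded is_F_brownian_motion_def]]]] .
      from spec[OF spec[OF this, of 0], of t] tp show
        "distributed M lborel Y (\<lambda>x. ennreal (normal_density 0 (sqrt (t - 0)) x))"
        "\<forall>A\<in>sets (F 0). \<forall>C\<in>sets borel.
           measure M (A \<inter> {\<omega>\<in>space M. Y \<omega> \<in> C})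
             = measure M A * measure M {\<omega>\<in>space M. Y \<omega> \<in> C}"
        unfolding Y_def by simp_all
    qed
    have YM[measurable]: "Y \<in> borel_measurable M"
      using distributed_measurable[OF BMt(1)] by simp
    define \<nu> where "\<nu> = distr M borel Y"
    have pnu: "prob_space \<nu>" unfolding \<nu>_def by (rule P.prob_space_distr) simp
    have sfu: "sigma_finite_measure unif_T" by (rule prob_space_imp_sigma_finite[OF prob_unif_T])
    have sfn: "sigma_finite_measure \<nu>" by (rule prob_space_imp_sigma_finite[OF pnu])
    have J: "unif_T \<Otimes>\<^sub>M \<nu> = distr M (borel \<Otimes>\<^sub>M borel) (\<lambda>\<omega>. (X0 \<omega>, Y \<omega>))"
    proof (rule pair_measure_eqI[OF sfu sfn])
      show "sets (unif_T \<Otimes>\<^sub>M \<nu>) = sets (distr M (borel \<Otimes>\<^sub>M borel) (\<lambda>\<omega>. (X0 \<omega>, Y \<omega>)))"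
        unfolding sets_distr by (rule sets_pair_measure_cong) (simp_all add: \<nu>_def)
    next
      fix A C assume A: "A \<in> sets unif_T" and C: "C \<in> sets \<nu>"
      hence A'[measurable]: "A \<in> sets borel" and C'[measurable]: "C \<in> sets borel" unfolding \<nu>_def by auto
      have AF: "X0 -` A \<inter> space M \<in> sets (F 0)"
        using measurable_sets[OF X0(1) A'] spF by simp
      have eqs: "(\<lambda>\<omega>. (X0 \<omega>, Y \<omega>)) -` (A \<times> C) \<inter> space M = (X0 -` A \<inter> space M) \<inter> {\<omega>\<in>space M. Y \<omega> \<in> C}"
        by auto
      have pm: "(\<lambda>\<omega>. (X0 \<omega>, Y \<omega>)) \<in> measurable M (borel \<Otimes>\<^sub>M borel)" by measurable
      have AC: "A \<times> C \<in> sets (borel \<Otimes>\<^sub>M borel)" by (rule pair_measureI[OF A' C'])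
      have "emeasure (distr M (borel \<Otimes>\<^sub>M borel) (\<lambda>\<omega>. (X0 \<omega>, Y \<omega>))) (A \<times> C)
          = emeasure M ((X0 -` A \<inter> space M) \<inter> {\<omega>\<in>space M. Y \<omega> \<in> C})"
        unfolding emeasure_distr[OF pm AC] eqs ..
      also have "\<dots> = ennreal (measure M (X0 -` A \<inter> space M) * measure M {\<omega>\<in>space M. Y \<omega> \<in> C})"
        using BMt(2) AF C' by (simp add: P.emeasure_eq_measure)
      also have "\<dots> = emeasure M (X0 -` A \<inter> space M) * emeasure M (Y -` C \<inter> space M)"
      proof -
        have "{\<omega>\<in>space M. Y \<omega> \<in> C} = Y -` C \<inter> space M" by auto
        thus ?thesis by (simp add: P.emeasure_eq_measure ennreal_mult)
      qed
      also have "\<dots> = emeasure unif_T A * emeasure \<nu> C"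
        unfolding LX[symmetric] \<nu>_def by (simp add: emeasure_distr)
      finally show "emeasure unif_T A * emeasure \<nu> C = emeasure (distr M (borel \<Otimes>\<^sub>M borel) (\<lambda>\<omega>. (X0 \<omega>, Y \<omega>))) (A \<times> C)" by simp
    qed
    define h where "h = (\<lambda>(x::real, y::real). tproj (x + (w * t + \<sigma> * y)))"
    have hM[measurable]: "h \<in> borel_measurable (borel \<Otimes>\<^sub>M borel)" unfolding h_def by measurable
    have "distr M borel (state B \<sigma> X0 w (\<lambda>t \<omega>. 0) t) = distr M borel (h \<circ> (\<lambda>\<omega>. (X0 \<omega>, Y \<omega>)))"
      by (rule distr_cong) (auto simp: st h_def Y_def B0 algebra_simps)
    also have "\<dots> = distr (distr M (borel \<Otimes>\<^sub>M borel) (\<lambda>\<omega>. (X0 \<omega>, Y \<omega>))) borel h"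
      by (rule distr_distr[symmetric]) auto
    also have "\<dots> = distr (unif_T \<Otimes>\<^sub>M \<nu>) borel h" using J by simp
    also have "\<dots> = unif_T"
    proof (rule measure_eqI)
      show "sets (distr (unif_T \<Otimes>\<^sub>M \<nu>) borel h) = sets unif_T" by simp
    next
      interpret PS: pair_sigma_finite unif_T \<nu> using sfu sfn by (simp add: pair_sigma_finite_def)
      interpret N: prob_space \<nu> by (rule pnu)
      have sp2: "sets (unif_T \<Otimes>\<^sub>M \<nu>) = sets (borel \<Otimes>\<^sub>M borel)"
        by (rule sets_pair_measure_cong) (simp_all add: \<nu>_def)
      have hM2: "h \<in> borel_measurable (unif_T \<Otimes>\<^sub>M \<nu>)"
        using hM by (simp only: measurable_cong_sets[OF sp2 refl])
      fix D assume "D \<in> sets (distr (unif_T \<Otimes>\<^sub>M \<nu>) borel h)"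
      hence D[measurable]: "D \<in> sets borel" by simp
      have sp: "space (unif_T \<Otimes>\<^sub>M \<nu>) = UNIV" by (simp add: space_pair_measure \<nu>_def)
      have "emeasure (distr (unif_T \<Otimes>\<^sub>M \<nu>) borel h) D = emeasure (unif_T \<Otimes>\<^sub>M \<nu>) (h -` D)"
        using hM2 by (subst emeasure_distr) (auto simp: sp)
      also have "\<dots> = (\<integral>\<^sup>+y. emeasure unif_T ((\<lambda>x. (x, y)) -` (h -` D)) \<partial>\<nu>)"
        using measurable_sets[OF hM2 D] sp by (intro PS.emeasure_pair_measure_alt2) simp
      also have "\<dots> = (\<integral>\<^sup>+y. emeasure unif_T D \<partial>\<nu>)"
      proof (rule nn_integral_cong)
        fix y
        have "emeasure unif_T ((\<lambda>x. (x, y)) -` (h -` D))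
            = emeasure unif_T ((\<lambda>x. tproj (x + (w * t + \<sigma> * y))) -` D \<inter> space unif_T)"
          by (simp add: h_def vimage_def)
        also have "\<dots> = emeasure (distr unif_T borel (\<lambda>x. tproj (x + (w * t + \<sigma> * y)))) D"
          by (subst emeasure_distr) auto
        also have "\<dots> = emeasure unif_T D" by (simp only: unif_T_translate)
        finally show "emeasure unif_T ((\<lambda>x. (x, y)) -` (h -` D)) = emeasure unif_T D" .
      qed
      also have "\<dots> = emeasure unif_T D" by (simp add: N.emeasure_space_1)
      finally show "emeasure (distr (unif_T \<Otimes>\<^sub>M \<nu>) borel h) D = emeasure unif_T D" .
    qed
    finally show ?thesis .
  qed
qed



theorem lemma2p1:
  fixes M :: "'a measure" and F :: "real \<Rightarrow> 'a measure" and B :: "real \<Rightarrow> 'a \<Rightarrow> real"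
    and g :: "real measure" and \<kappa> \<beta> \<sigma> :: real
  assumes "usual_filtered_prob_space M F"
    and "is_F_brownian_motion M F B"
    and "rich_F0 M F"
    and "prob_space g" and "sets g = sets borel" and "integrable g (\<lambda>w. w)"
    and "\<kappa> \<ge> 0" and "\<beta> > 0" and "\<sigma> > 0"
  shows "stationary_MFG_equilibrium M F B \<beta> \<sigma> \<kappa> g (unif_T \<Otimes>\<^sub>M g)"
proof -
  note U = assms(1) and BM = assms(2) and pg = assms(4) and sg = assms(5)
  define \<mu> where "\<mu> = unif_T \<Otimes>\<^sub>M g"
  interpret G: prob_space g by (rule pg)
  interpret UT: prob_space unif_T by (rule prob_unif_T)
  interpret PP: pair_prob_space unif_T g by unfold_locales
  have spg: "space g = UNIV" using sets_eq_imp_space_eq[OF sg] by simp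
  have smu: "sets \<mu> = sets (borel \<Otimes>\<^sub>M borel)"
    unfolding \<mu>_def by (rule sets_pair_measure_cong) (simp_all add: sg)
  have prob_TR_mu: "prob_TR \<mu>"
    unfolding prob_TR_def
  proof (intro conjI)
    show "prob_space \<mu>" unfolding \<mu>_def by (rule prob_space_pair[OF prob_unif_T pg])
    show "sets \<mu> = sets (borel \<Otimes>\<^sub>M borel)" by (rule smu)
    have "emeasure \<mu> (torus_set \<times> space g) = emeasure unif_T torus_set * emeasure g (space g)"
      unfolding \<mu>_def by (rule G.emeasure_pair_measure_Times) (auto simp: torus_set_def)
    also have "\<dots> = 1" by (simp add: unif_T_def torus_set_def G.emeasure_space_1)
    finally show "emeasure \<mu> (torus_set \<times> UNIV) = 1" by (simp add: spg)
  qed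
  have marg: "distr \<mu> borel snd = g"
  proof (rule measure_eqI)
    show "sets (distr \<mu> borel snd) = sets g" by (simp add: sg)
  next
    fix C assume "C \<in> sets (distr \<mu> borel snd)"
    hence C: "C \<in> sets borel" by simp
    have "emeasure (distr \<mu> borel snd) C = emeasure \<mu> (snd -` C \<inter> space \<mu>)"
      by (rule emeasure_distr) (auto simp: smu measurable_cong_sets[OF smu refl] C)
    also have "snd -` C \<inter> space \<mu> = space unif_T \<times> C"
      by (auto simp: \<mu>_def space_pair_measure spg)
    also have "emeasure \<mu> (space unif_T \<times> C) = emeasure unif_T (space unif_T) * emeasure g C"
      unfolding \<mu>_def by (rule G.emeasure_pair_measure_Times) (auto simp: sg C)
    also have "\<dots> = emeasure g C" using UT.emeasure_space_1 by simp
    finally show "emeasure (distr \<mu> borel snd) C = emeasure g C" .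
  qed
  have cc: "cost_c x \<mu> = cost_c 0 \<mu>" for x
    unfolding \<mu>_def by (rule cost_c_const[OF pg sg])
  define \<alpha>0 :: "real \<Rightarrow> 'a \<Rightarrow> real" where "\<alpha>0 = (\<lambda>t \<omega>. 0)"
  have adm0: "\<alpha>0 \<in> admissible M F"
    unfolding admissible_def progressive_def \<alpha>0_def by simp
  have Jle: "cost_J M B \<beta> \<sigma> \<kappa> (\<lambda>t. \<mu>) X0 w \<alpha>0 \<le> cost_J M B \<beta> \<sigma> \<kappa> (\<lambda>t. \<mu>) X0 w \<alpha>" for X0 w \<alpha>
    unfolding cost_J_def
  proof (intro nn_integral_mono)
    fix \<omega> t
    have "exp (- \<beta> * t) * ((\<alpha>0 t \<omega>)\<^sup>2 / 2 + \<kappa> * cost_c (state B \<sigma> X0 w \<alpha>0 t \<omega>) \<mu>)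
        \<le> exp (- \<beta> * t) * ((\<alpha> t \<omega>)\<^sup>2 / 2 + \<kappa> * cost_c (state B \<sigma> X0 w \<alpha> t \<omega>) \<mu>)"
      by (intro mult_left_mono) (auto simp: \<alpha>0_def cc[of "state B \<sigma> X0 w \<alpha> t \<omega>"] cc[of "state B \<sigma> X0 w (\<lambda>t \<omega>. 0) t \<omega>"])
    thus "ennreal (exp (- \<beta> * t) * ((\<alpha>0 t \<omega>)\<^sup>2 / 2 + \<kappa> * cost_c (state B \<sigma> X0 w \<alpha>0 t \<omega>) \<mu>)) * indicator {0..} t
        \<le> ennreal (exp (- \<beta> * t) * ((\<alpha> t \<omega>)\<^sup>2 / 2 + \<kappa> * cost_c (state B \<sigma> X0 w \<alpha> t \<omega>) \<mu>)) * indicator {0..} t"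
      by (intro mult_right_mono ennreal_leI) auto
  qed
  show ?thesis
    unfolding stationary_MFG_equilibrium_def MFG_solution_def \<mu>_def[symmetric]
  proof (intro conjI allI impI bexI[of _ UNIV] exI[of _ "\<lambda>t w. unif_T"] ballI)
    show "\<And>t. 0 \<le> t \<Longrightarrow> prob_TR \<mu>" by (rule prob_TR_mu)
    show "\<And>t. 0 \<le> t \<Longrightarrow> distr \<mu> borel snd = g" by (rule marg)
    show "UNIV \<in> sets borel" by simp
    show "emeasure g UNIV = 1" using G.emeasure_space_1 spg by simp
    show "\<And>t A. 0 \<le> t \<Longrightarrow> A \<in> sets borel \<Longrightarrow> (\<lambda>w. emeasure unif_T A) \<in> borel_measurable borel"
      by simp
    show "emeasure \<mu> (A \<times> C) = (\<integral>\<^sup>+w. indicator C w * emeasure unif_T A \<partial>g)"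
      if "0 \<le> t" "A \<in> sets borel" "C \<in> sets borel" for t A C
    proof -
      have "emeasure \<mu> (A \<times> C) = emeasure unif_T A * emeasure g C"
        unfolding \<mu>_def by (rule G.emeasure_pair_measure_Times) (auto simp: sg that)
      also have "\<dots> = (\<integral>\<^sup>+w. emeasure unif_T A * indicator C w \<partial>g)"
        by (subst nn_integral_cmult_indicator) (auto simp: sg that)
      finally show ?thesis by (simp add: mult.commute)
    qed
    show "\<And>w t. w \<in> UNIV \<Longrightarrow> 0 \<le> t \<Longrightarrow> prob_T unif_T"
      unfolding prob_T_def using prob_unif_T
      by (simp add: unif_T_def torus_set_def)
    show "\<exists>\<alpha>s\<in>admissible M F.
            (INF \<alpha>\<in>admissible M F. cost_J M B \<beta> \<sigma> \<kappa> (\<lambda>t. \<mu>) X0 w \<alpha>) = cost_J M B \<beta> \<sigma> \<kappa> (\<lambda>t. \<mu>) X0 w \<alpha>s \<and>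
            (\<forall>t\<ge>0. distr M borel (state B \<sigma> X0 w \<alpha>s t) = unif_T)"
      if "w \<in> UNIV" and X0: "X0 \<in> borel_measurable (F 0) \<and> (\<forall>\<omega>\<in>space M. X0 \<omega> \<in> torus_set) \<and> distr M borel X0 = unif_T"
      for w X0
    proof (rule bexI[OF _ adm0], intro conjI allI impI)
      show "(INF \<alpha>\<in>admissible M F. cost_J M B \<beta> \<sigma> \<kappa> (\<lambda>t. \<mu>) X0 w \<alpha>) = cost_J M B \<beta> \<sigma> \<kappa> (\<lambda>t. \<mu>) X0 w \<alpha>0"
      proof (rule antisym)
        show "(INF \<alpha>\<in>admissible M F. cost_J M B \<beta> \<sigma> \<kappa> (\<lambda>t. \<mu>) X0 w \<alpha>) \<le> cost_J M B \<beta> \<sigma> \<kappa> (\<lambda>t. \<mu>) X0 w \<alpha>0"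
          by (rule INF_lower[OF adm0])
        show "cost_J M B \<beta> \<sigma> \<kappa> (\<lambda>t. \<mu>) X0 w \<alpha>0 \<le> (INF \<alpha>\<in>admissible M F. cost_J M B \<beta> \<sigma> \<kappa> (\<lambda>t. \<mu>) X0 w \<alpha>)"
          by (rule INF_greatest) (rule Jle)
      qed
      fix t :: real assume "0 \<le> t"
      thus "distr M borel (state B \<sigma> X0 w \<alpha>0 t) = unif_T"
        unfolding \<alpha>0_def using law_state[OF U BM] X0 by blast
    qed
  qed
qed

end
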